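(* Let $K\subseteq L$ be real closed fields, and $C$ an additive cut in $L$. Let $C'$ and $C'_{\mathrm{mlt}}$ be the cuts induced on $K$ by $C$ and $C_{\mathrm{mlt}}$ respectively, i.e. $C'=(C^-\cap K,C^+\cap K)$ and $C'_{\mathrm{mlt}}=((C_{\mathrm{mlt}})^-\cap K,(C_{\mathrm{mlt}})^+\cap K)$. Suppose that $C'_{\mathrm{mlt}}=(C')_{\mathrm{mlt}}$, and that $x,y\in L$ are two realizations of the cut $C'$ of $K$, with $x\in C^-$ and $y\in C^+$. Then $y/x$ induces the cut $C'_{\mathrm{mlt}}$ on $K$; that is, $(C'_{\mathrm{mlt}})^-=\{a\in K: a<y/x\}$ and $(C'_{\mathrm{mlt}})^+=\{a\in K: a\ge y/x\}$.
   Context: A cut of an ordered field $F$ is a pair $C=(C^-,C^+)$ with $F=C^-\cup C^+$ disjoint and $C^-<C^+$. $F_+=\{c\in F: c>0\}$. A cut $C$ of $F$ is additive if $C^-$ is closed under addition and contains some positive element. For a cut $C$ of $F$, $C_{\mathrm{mlt}}$ is the cut of $F$ whose left side is $\{r\in F: r\cdot(C^-\cap F_+)\subseteq C^-\}$ (and whose right side is the complement). An element $a$ of an extension field realizes a cut $D$ of $K$ if $D^-=\{c\in K:c<a\}$ and $D^+=\{c\in K:c>a\}$. *)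

theory Defs
  imports "HOL-Computational_Algebra.Polynomial"
begin

text \<open>An ordered field is represented by a type of class linordered_field; a subfield K
  of it by a subset.\<close>

definition subfield :: "'a::linordered_field set \<Rightarrow> bool" where
  "subfield K \<longleftrightarrow> 0 \<in> K \<and> 1 \<in> K \<and> (\<forall>a\<in>K. \<forall>b\<in>K. a + b \<in> K \<and> a * b \<in> K)
     \<and> (\<forall>a\<in>K. - a \<in> K) \<and> (\<forall>a\<in>K. a \<noteq> 0 \<longrightarrow> inverse a \<in> K)"

definition real_closed_subfield :: "'a::linordered_field set \<Rightarrow> bool" where
  "real_closed_subfield K \<longleftrightarrow> subfield K
     \<and> (\<forall>a\<in>K. a > 0 \<longrightarrow> (\<exists>b\<in>K. b * b = a))
     \<and> (\<forall>p :: 'a poly. odd (degree p) \<longrightarrow> (\<forall>i. coeff p i \<in> K) \<longrightarrow> (\<exists>x\<in>K. poly p x = 0))"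

definition is_cut :: "'a::linordered_field set \<Rightarrow> 'a set \<times> 'a set \<Rightarrow> bool" where
  "is_cut F C \<longleftrightarrow> fst C \<union> snd C = F \<and> fst C \<inter> snd C = {}
     \<and> (\<forall>a\<in>fst C. \<forall>b\<in>snd C. a < b)"

definition additive_cut :: "'a::linordered_field set \<Rightarrow> 'a set \<times> 'a set \<Rightarrow> bool" where
  "additive_cut F C \<longleftrightarrow> is_cut F C
     \<and> (\<forall>a\<in>fst C. \<forall>b\<in>fst C. a + b \<in> fst C) \<and> (\<exists>a\<in>fst C. a > 0)"

definition mlt_cut :: "'a::linordered_field set \<Rightarrow> 'a set \<times> 'a set \<Rightarrow> 'a set \<times> 'a set" where
  "mlt_cut F C = (let M = {r\<in>F. \<forall>c\<in>fst C \<inter> {c\<in>F. c > 0}. r * c \<in> fst C} in (M, F - M))"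

definition restrict_cut :: "'a set \<Rightarrow> 'a set \<times> 'a set \<Rightarrow> 'a set \<times> 'a set" where
  "restrict_cut K C = (fst C \<inter> K, snd C \<inter> K)"

definition realizes :: "'a::linordered_field \<Rightarrow> 'a set \<Rightarrow> 'a set \<times> 'a set \<Rightarrow> bool" where
  "realizes a K D \<longleftrightarrow> fst D = {c\<in>K. c < a} \<and> snd D = {c\<in>K. c > a}"

end

theory Submission
  imports Defs
begin

theorem lemma2p10:
  fixes K :: "'a::linordered_field set" and C :: "'a set \<times> 'a set" and x y :: 'a
  assumes "real_closed_subfield (UNIV :: 'a set)"
    and "real_closed_subfield K"
    and "additive_cut UNIV C"
    and "restrict_cut K (mlt_cut UNIV C) = mlt_cut K (restrict_cut K C)"
    and "realizes x K (restrict_cut K C)"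
    and "realizes y K (restrict_cut K C)"
    and "x \<in> fst C" and "y \<in> snd C"
  shows "fst (restrict_cut K (mlt_cut UNIV C)) = {a\<in>K. a < y / x}
       \<and> snd (restrict_cut K (mlt_cut UNIV C)) = {a\<in>K. a \<ge> y / x}"
proof -
  have sf: "subfield K" using assms(2) unfolding real_closed_subfield_def by blast
  have K0: "0 \<in> K" and Kmul: "\<And>a b. a \<in> K \<Longrightarrow> b \<in> K \<Longrightarrow> a * b \<in> K"
    using sf unfolding subfield_def by auto
  have cut: "fst C \<union> snd C = UNIV" "fst C \<inter> snd C = {}" "\<forall>a\<in>fst C. \<forall>b\<in>snd C. a < b"
    and pos: "\<exists>a\<in>fst C. a > 0"
    using assms(3) unfolding additive_cut_def is_cut_def by auto
  have rx: "fst C \<inter> K = {c\<in>K. c < x}" "snd C \<inter> K = {c\<in>K. c > x}"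
    using assms(5) unfolding realizes_def restrict_cut_def by auto
  have ry: "fst C \<inter> K = {c\<in>K. c < y}" "snd C \<inter> K = {c\<in>K. c > y}"
    using assms(6) unfolding realizes_def restrict_cut_def by auto
  have "0 \<in> fst C"
  proof (rule ccontr)
    assume "0 \<notin> fst C"
    then have "0 \<in> snd C" using cut(1) by auto
    with pos cut(3) show False by force
  qed
  then have xpos: "x > 0" using rx(1) K0 by auto
  define M where "M = {r\<in>(UNIV::'a set). \<forall>c\<in>fst C \<inter> {c\<in>UNIV. c > 0}. r * c \<in> fst C}"
  have mU: "mlt_cut UNIV C = (M, UNIV - M)" unfolding mlt_cut_def M_def Let_def by simp
  have hyp: "M \<inter> K = {r\<in>K. \<forall>c\<in>fst C \<inter> K \<inter> {c\<in>K. c > 0}. r * c \<in> fst C \<inter> K}"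
    using assms(4) unfolding mU mlt_cut_def restrict_cut_def Let_def M_def by simp
  have key: "a \<in> M \<longleftrightarrow> a < y / x" if aK: "a \<in> K" for a
  proof
    assume "a \<in> M"
    then have "a * x \<in> fst C" using assms(7) xpos unfolding M_def by auto
    then have "a * x < y" using cut(3) assms(8) by auto
    then show "a < y / x" using xpos by (simp add: pos_less_divide_eq)
  next
    assume lt: "a < y / x"
    show "a \<in> M"
    proof (rule ccontr)
      assume "a \<notin> M"
      then have "a \<notin> M \<inter> K" by auto
      then obtain c where c: "c \<in> fst C" "c \<in> K" "c > 0" "a * c \<notin> fst C \<inter> K"
        using hyp aK by auto
      have acK: "a * c \<in> K" using Kmul aK c(2) .
      then have "a * c \<in> snd C" using c(4) cut(1) by auto
      then have acy: "a * c > y" using ry(2) acK by auto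
      have cx: "c < x" using rx(1) c by auto
      have "a > 0"
      proof (rule ccontr)
        assume "\<not> a > 0"
        then have "a * c \<le> 0" using c(3) by (simp add: mult_nonpos_nonneg)
        moreover have "y > 0" using xpos assms(7,8) cut(3) by force
        ultimately show False using acy by simp
      qed
      then have "a * c < a * x" using cx by simp
      with acy have "y < a * x" by simp
      then have "y / x < a" using xpos by (simp add: pos_divide_less_eq)
      with lt show False by simp
    qed
  qed
  show ?thesis
    unfolding mU restrict_cut_def using key by auto
qed

end
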